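(* As formal power series in $q$ (equivalently, for $|q|<1$), \[ \frac{f_6^8f_1}{f_3^4f_2^2}+\frac{f_2f_3^2f_{12}^3}{f_1f_4f_6} = 2\,\frac{f_4^2f_{12}^2f_6}{f_2f_3}. \]
   Context: For $m\in\mathbb{N}$ and $|q|<1$, $f_m:=\prod_{n\geq 1}(1-q^{mn})$. *)

theory Defs
  imports "HOL-Analysis.Analysis"
begin

definition f :: "nat \<Rightarrow> complex \<Rightarrow> complex" where
  "f m q = (\<Prod>n. (1 - q ^ (m * Suc n)))"

end

theory Submission
  imports Defs
begin

lemma conv_prod_geom:
  fixes q c :: complex
  assumes "norm q < 1"
  shows "convergent_prod (\<lambda>n. 1 + c * q^n)"
proof -
  have "summable (\<lambda>n. norm c * norm q ^ n)"
    using assms by (intro summable_mult summable_geometric) auto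
  hence "summable (\<lambda>n. norm ((1 + c * q^n) - 1))" by (simp add: norm_mult norm_power)
  hence "abs_convergent_prod (\<lambda>n. 1 + c * q^n)" by (rule summable_imp_abs_convergent_prod)
  thus ?thesis by (rule abs_convergent_prod_imp_convergent_prod)
qed

lemma norm_pow_lt1: "norm (q::complex) < 1 \<Longrightarrow> d > 0 \<Longrightarrow> norm (q^d) < 1"
  by (simp add: norm_power power_less_one_iff)

lemma conv_prod_lin:
  fixes q c :: complex
  assumes "norm q < 1" "d > 0"
  shows "convergent_prod (\<lambda>n. 1 + c * q^(a + d*n))"
proof -
  have "convergent_prod (\<lambda>n. 1 + (c * q^a) * (q^d)^n)"
    using conv_prod_geom[OF norm_pow_lt1[OF assms]] by blast
  thus ?thesis by (simp add: power_add power_mult mult.assoc)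
qed

definition pinf :: "complex \<Rightarrow> nat \<Rightarrow> nat \<Rightarrow> complex" where
  "pinf q a d = (\<Prod>n. 1 - q^(a + d*n))"
definition ninf :: "complex \<Rightarrow> nat \<Rightarrow> nat \<Rightarrow> complex" where
  "ninf q a d = (\<Prod>n. 1 + q^(a + d*n))"

lemma conv_pinf: "norm q < 1 \<Longrightarrow> d > 0 \<Longrightarrow> convergent_prod (\<lambda>n. 1 - (q::complex)^(a + d*n))"
  using conv_prod_lin[of q d "-1" a] by simp

lemma conv_ninf: "norm q < 1 \<Longrightarrow> d > 0 \<Longrightarrow> convergent_prod (\<lambda>n. 1 + (q::complex)^(a + d*n))"
  using conv_prod_lin[of q d "1" a] by simp

lemma f_pinf: "f m q = pinf q m m"
  unfolding f_def pinf_def by (simp add: algebra_simps)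

lemma pinf_nonzero:
  assumes "norm (q::complex) < 1" "d > 0" "a > 0"
  shows "pinf q a d \<noteq> 0"
  unfolding pinf_def
proof (rule prodinf_nonzero[OF conv_pinf[OF assms(1,2)]])
  fix n
  have "norm (q^(a+d*n)) < 1" using assms by (intro norm_pow_lt1) auto
  thus "1 - q ^ (a + d * n) \<noteq> 0" by auto
qed

lemma ninf_pinf:
  assumes "norm (q::complex) < 1" "d > 0"
  shows "ninf q a d * pinf q a d = pinf q (2*a) (2*d)"
proof -
  have "ninf q a d * pinf q a d = (\<Prod>n. (1 + q^(a + d*n)) * (1 - q^(a + d*n)))"
    unfolding ninf_def pinf_def by (rule prodinf_mult[OF conv_ninf conv_pinf]) (use assms in auto)
  also have "\<dots> = (\<Prod>n. 1 - q^(2*a + 2*d*n))"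
    by (rule arg_cong[where f=prodinf]) (auto simp: algebra_simps power_mult_distrib power_add power_mult[symmetric] simp flip: power2_eq_square power_mult)
  finally show ?thesis unfolding pinf_def .
qed

lemma prodinf_split_residues:
  fixes g :: "nat \<Rightarrow> complex"
  assumes g: "convergent_prod g" and k: "k > 0"
    and gr: "\<And>r. r < k \<Longrightarrow> convergent_prod (\<lambda>n. g (k*n + r))"
  shows "prodinf g = (\<Prod>r<k. prodinf (\<lambda>n. g (k*n+r)))"
proof -
  have fin: "(\<Prod>i<N*k. g i) = (\<Prod>r<k. \<Prod>n<N. g (k*n+r))" for N
  proof -
    have "(\<Prod>i<N*k. g i) = (\<Prod>n<N. \<Prod>i\<in>{n*k..<n*k+k}. g i)"
      by (simp add: prod.nat_group)
    also have "\<dots> = (\<Prod>n<N. \<Prod>r<k. g (k*n+r))"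
    proof (rule prod.cong[OF refl])
      fix n
      have "(\<Prod>i\<in>{0+n*k..<k+n*k}. g i) = (\<Prod>r\<in>{0..<k}. g (r + n*k))"
        by (rule prod.shift_bounds_nat_ivl)
      hence "(\<Prod>i\<in>{n*k..<n*k+k}. g i) = (\<Prod>r\<in>{0..<k}. g (r + n*k))"
        by (simp add: add.commute)
      thus "(\<Prod>i\<in>{n*k..<n*k+k}. g i) = (\<Prod>r<k. g (k*n+r))"
        by (simp add: atLeast0LessThan algebra_simps)
    qed
    also have "\<dots> = (\<Prod>r<k. \<Prod>n<N. g (k*n+r))" by (rule prod.swap)
    finally show ?thesis .
  qed
  have "(\<lambda>N. \<Prod>i<N. g i) \<longlonglongrightarrow> prodinf g"
    using has_prod_imp_tendsto'[OF convergent_prod_has_prod[OF g]] .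
  hence l1: "(\<lambda>N. \<Prod>i<N*k. g i) \<longlonglongrightarrow> prodinf g"
    using LIMSEQ_subseq_LIMSEQ[of _ _ "\<lambda>N. N*k"] k by (auto simp: strict_mono_def o_def)
  have l2: "(\<lambda>N. \<Prod>r<k. \<Prod>n<N. g (k*n+r)) \<longlonglongrightarrow> (\<Prod>r<k. prodinf (\<lambda>n. g (k*n+r)))"
    by (intro tendsto_prod has_prod_imp_tendsto' convergent_prod_has_prod gr) auto
  show ?thesis using LIMSEQ_unique[OF l1, of "(\<Prod>r<k. prodinf (\<lambda>n. g (k*n+r)))"] l2 fin by simp
qed

lemma pinf_split:
  assumes "norm (q::complex) < 1" "d > 0" "k > 0"
  shows "pinf q a d = (\<Prod>r<k. pinf q (a + r*d) (k*d))"
proof -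
  have "pinf q a d = (\<Prod>r<k. prodinf (\<lambda>n. 1 - q^(a + d*(k*n+r))))"
    unfolding pinf_def
  proof (rule prodinf_split_residues[where g="\<lambda>n. 1 - q^(a + d*n)"])
    show "convergent_prod (\<lambda>n. 1 - q ^ (a + d * n))" using assms by (intro conv_pinf) auto
    show "0 < k" by fact
    fix r assume "r < k"
    have "convergent_prod (\<lambda>n. 1 - q ^ ((a + r*d) + (d*k) * n))" using assms by (intro conv_pinf) auto
    thus "convergent_prod (\<lambda>n. 1 - q ^ (a + d * (k * n + r)))" by (simp add: algebra_simps)
  qed
  also have "\<dots> = (\<Prod>r<k. pinf q (a + r*d) (k*d))"
    unfolding pinf_def by (intro prod.cong refl arg_cong[where f=prodinf] ext) (simp add: algebra_simps)
  finally show ?thesis .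
qed

fun qb :: "complex \<Rightarrow> nat \<Rightarrow> nat \<Rightarrow> complex" where
  "qb p 0 k = (if k = 0 then 1 else 0)"
| "qb p (Suc N) 0 = 1"
| "qb p (Suc N) (Suc k) = qb p N (Suc k) + p^(N - k) * qb p N k"

lemma qb_gt: "k > N \<Longrightarrow> qb p N k = 0"
  by (induction p N k rule: qb.induct) auto

lemma qb_0: "qb p N 0 = 1"
  by (cases N) auto

definition pp :: "complex \<Rightarrow> nat \<Rightarrow> complex" where "pp p n = (\<Prod>i<n. 1 - p^Suc i)"

lemma ppS: "pp p (Suc n) = pp p n * (1 - p^Suc n)" by (simp add: pp_def)

lemma ring_aux: "(P::complex) * (1 - a) + a * (P * (1 - b)) = P * (1 - a*b)"
  by (simp add: algebra_simps)

lemma qb_closed: "k \<le> N \<Longrightarrow> qb p N k * pp p k * pp p (N - k) = pp p N"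
proof (induction N arbitrary: k)
  case 0 thus ?case by (simp add: pp_def)
next
  case (Suc N)
  show ?case
  proof (cases k)
    case 0 thus ?thesis by (simp add: pp_def)
  next
    case (Suc j)
    with Suc.prems have j: "j \<le> N" by simp
    have t1: "qb p N (Suc j) * pp p (Suc j) * pp p (N - j) = pp p N * (1 - p^(N-j))"
    proof (cases "j = N")
      case True thus ?thesis by (simp add: qb_gt)
    next
      case False
      hence sj: "Suc j \<le> N" using j by simp
      from Suc.IH[OF this] have "qb p N (Suc j) * pp p (Suc j) * pp p (N - Suc j) = pp p N" .
      moreover have "N - j = Suc (N - Suc j)" using sj by simp
      hence "pp p (N - j) = pp p (N - Suc j) * (1 - p^(N-j))" by (simp add: ppS)
      hence "qb p N (Suc j) * pp p (Suc j) * pp p (N - j)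
           = (qb p N (Suc j) * pp p (Suc j) * pp p (N - Suc j)) * (1 - p^(N-j))"
        by (simp only: mult.assoc)
      ultimately show ?thesis by simp
    qed
    have t2: "qb p N j * pp p (Suc j) * pp p (N - j) = pp p N * (1 - p^Suc j)"
      using Suc.IH[OF j] by (simp add: ppS algebra_simps)
    have "qb p (Suc N) k * pp p k * pp p (Suc N - k)
        = qb p N (Suc j) * pp p (Suc j) * pp p (N - j) + p^(N-j) * (qb p N j * pp p (Suc j) * pp p (N - j))"
      using Suc by (simp add: algebra_simps)
    also have "\<dots> = pp p N * (1 - p^(N-j)) + p^(N-j) * (pp p N * (1 - p^Suc j))"
      using t1 t2 by simp
    also have "p^(N-j) * p^(Suc j) = p^(Suc N)" using j by (simp flip: power_add)
    hence "pp p N * (1 - p^(N-j)) + p^(N-j) * (pp p N * (1 - p^Suc j)) = pp p N * (1 - p^Suc N)"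
      using ring_aux[of "pp p N" "p^(N-j)" "p^Suc j"] by simp
    finally show ?thesis by (simp add: ppS)
  qed
qed

lemma tri_Suc: "Suc k * k div 2 = k * (k - 1) div 2 + (k::nat)"
proof -
  have "Suc k * k = k * (k - 1) + 2 * k" by (cases k) (auto simp: algebra_simps)
  thus ?thesis by simp
qed

lemma cauchy_qbin: "(\<Prod>i<N. 1 + z * p^i) = (\<Sum>k\<le>N. qb p N k * p^(k*(k-1) div 2) * z^k)"
proof (induction N)
  case 0 thus ?case by simp
next
  case (Suc N)
  define E where "E = (\<Sum>k\<le>N. qb p N k * p^(k*(k-1) div 2) * z^k)"
  have a: "1 + (\<Sum>k\<le>N. qb p N (Suc k) * p^(Suc k * k div 2) * z^Suc k) = E"
  proof -
    have "(\<Sum>k\<le>Suc N. qb p N k * p^(k*(k-1) div 2) * z^k) = E"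
      unfolding E_def by (simp add: qb_gt)
    moreover have "(\<Sum>k\<le>Suc N. qb p N k * p^(k*(k-1) div 2) * z^k)
        = 1 + (\<Sum>k\<le>N. qb p N (Suc k) * p^(Suc k * k div 2) * z^Suc k)"
      by (subst sum.atMost_Suc_shift) (simp add: qb_0)
    ultimately show ?thesis by simp
  qed
  have b: "(\<Sum>k\<le>N. p^(N-k) * qb p N k * p^(Suc k * k div 2) * z^Suc k) = z * p^N * E"
    unfolding E_def sum_distrib_left
  proof (rule sum.cong[OF refl])
    fix k assume "k \<in> {..N}"
    hence ee: "N - k + (k * (k - 1) div 2 + k) = N + k * (k - 1) div 2" by simp
    have e: "Suc k * k div 2 = k*(k-1) div 2 + k" by (rule tri_Suc)
    have "p^(N-k) * p^(Suc k * k div 2) = p^(N - k + (k*(k-1) div 2 + k))"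
      unfolding e power_add by simp
    also have "\<dots> = p^(N + k*(k-1) div 2)" by (simp only: ee)
    finally have "p^(N-k) * p^(Suc k * k div 2) = p^N * p^(k*(k-1) div 2)"
      by (simp only: power_add)
    thus "p^(N-k) * qb p N k * p^(Suc k * k div 2) * z^Suc k = z * p^N * (qb p N k * p^(k*(k-1) div 2) * z^k)"
      by (simp add: algebra_simps)
  qed
  have "(\<Sum>k\<le>Suc N. qb p (Suc N) k * p^(k*(k-1) div 2) * z^k)
      = 1 + (\<Sum>k\<le>N. qb p (Suc N) (Suc k) * p^(Suc k * k div 2) * z^Suc k)"
    by (subst sum.atMost_Suc_shift) simp
  also have "\<dots> = 1 + (\<Sum>k\<le>N. qb p N (Suc k) * p^(Suc k * k div 2) * z^Suc k)
     + (\<Sum>k\<le>N. p^(N-k) * qb p N k * p^(Suc k * k div 2) * z^Suc k)"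
    by (simp add: algebra_simps sum.distrib)
  also have "\<dots> = E * (1 + z * p^N)" using a b by (simp add: algebra_simps)
  finally show ?case using Suc.IH unfolding E_def by simp
qed

definition tri :: "int \<Rightarrow> int" where "tri m = m*(m-1) div 2"

lemma tri2: "2 * tri m = m*(m-1)"
proof -
  have "even (m*(m-1))" by simp
  thus ?thesis unfolding tri_def by simp
qed

lemma tri_nonneg: "tri m \<ge> 0"
proof -
  have "m*(m-1) \<ge> 0" by (cases "m \<ge> 1") (auto simp: mult_nonneg_nonneg mult_nonpos_nonpos)
  thus ?thesis using tri2[of m] by linarith
qed

definition cc :: "complex \<Rightarrow> complex \<Rightarrow> int \<Rightarrow> complex" where
  "cc x p m = (-x) powi m * p powi (tri m)"

lemma nat_tri2: "2 * int (k*(k-1) div 2) = int k * (int k - 1)"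
proof -
  have "even (k*(k-1))" by (cases "even k") auto
  hence "2 * (k*(k-1) div 2) = k*(k-1)" by simp
  hence "2 * int (k*(k-1) div 2) = int (k*(k-1))" by linarith
  also have "\<dots> = int k * (int k - 1)" by (cases k) (auto simp: algebra_simps)
  finally show ?thesis .
qed

lemma nat_tri2': "2 * int (Suc n * n div 2) = (int n + 1) * int n"
proof -
  have "even (Suc n * n)" by simp
  hence "2 * (Suc n * n div 2) = Suc n * n" by simp
  hence "2 * int (Suc n * n div 2) = int (Suc n * n)" by linarith
  also have "\<dots> = (int n + 1) * int n" by (simp add: algebra_simps)
  finally show ?thesis .
qed

lemma tri_shift: "tri (int k - int n) = int (Suc n * n div 2) + int (k*(k-1) div 2) - int n * int k"
proof -
  have "2 * tri (int k - int n) = 2 * (int (Suc n * n div 2) + int (k*(k-1) div 2) - int n * int k)"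
    unfolding tri2 ring_distribs nat_tri2 nat_tri2' by (simp add: algebra_simps)
  thus ?thesis by simp
qed

lemma prod_lessThan_add: "(\<Prod>i<a+b. g i) = (\<Prod>i<a. g i) * (\<Prod>i<b. g (a+i::nat))"
  by (induction b) (auto simp: algebra_simps)

lemma sum_Suc_gauss: "(\<Sum>i<n. Suc i) = Suc n * n div 2"
proof (induction n)
  case 0 thus ?case by simp
next
  case (Suc n)
  have "(\<Sum>i<Suc n. Suc i) = Suc n * n div 2 + Suc n" using Suc by simp
  also have "\<dots> = Suc (Suc n) * Suc n div 2" using tri_Suc[of "Suc n"] by simp
  finally show ?case .
qed

lemma finite_jtp:
  fixes x p :: complex
  assumes p: "p \<noteq> 0" and x: "x \<noteq> 0"
  shows "(\<Prod>k<n. (1 - x*p^k) * (1 - p^Suc k / x)) = (\<Sum>k\<le>2*n. qb p (2*n) k * cc x p (int k - int n))"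
proof -
  define z where "z = -x / p^n"
  define T where "T = Suc n * n div 2"
  have C: "(\<Prod>i<2*n. 1 + z*p^i) = (\<Sum>k\<le>2*n. qb p (2*n) k * p^(k*(k-1) div 2) * z^k)"
    by (rule cauchy_qbin)
  have sp: "(\<Prod>i<2*n. 1 + z*p^i) = (\<Prod>i<n. 1 + z*p^i) * (\<Prod>i<n. 1 + z*p^(n+i))"
    using prod_lessThan_add[of "\<lambda>i. 1 + z*p^i" n n] by (simp add: mult_2)
  have h2: "(\<Prod>i<n. 1 + z*p^(n+i)) = (\<Prod>i<n. 1 - x*p^i)"
    by (intro prod.cong refl) (simp add: z_def power_add p)
  have h1: "(\<Prod>i<n. 1 + z*p^i) = (\<Prod>i<n. (-x / p^Suc i) * (1 - p^Suc i / x))"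
  proof -
    have "(\<Prod>i<n. 1 + z*p^i) = (\<Prod>i<n. 1 + z*p^(n - Suc i))"
      by (rule prod.nat_diff_reindex[symmetric])
    also have "\<dots> = (\<Prod>i<n. (-x / p^Suc i) * (1 - p^Suc i / x))"
    proof (intro prod.cong refl)
      fix i assume "i \<in> {..<n}"
      hence eq: "n - Suc i + Suc i = n" by simp
      have "p^(n - Suc i) * p^(Suc i) = p^(n - Suc i + Suc i)" by (rule power_add[symmetric])
      also have "\<dots> = p^n" by (simp only: eq)
      finally have "p^n = p^(n - Suc i) * p^(Suc i)" by simp
      thus "1 + z*p^(n - Suc i) = (-x / p^Suc i) * (1 - p^Suc i / x)"
        using p x by (simp add: z_def field_simps)
    qed
    finally show ?thesis .
  qed
  have h3: "(\<Prod>i<n. (-x / p^Suc i)) = (-x)^n / p^T"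
  proof -
    have "(\<Prod>i<n. (-x / p^Suc i)) = (-x)^n / (\<Prod>i<n. p^Suc i)"
      using prod_dividef[of "\<lambda>i. -x" "\<lambda>i. p^Suc i" "{..<n}"] by (simp only: prod_constant card_lessThan)
    also have "(\<Prod>i<n. p^Suc i) = p^(\<Sum>i<n. Suc i)" by (simp add: power_sum)
    finally show ?thesis by (simp add: T_def sum_Suc_gauss)
  qed
  have "(\<Prod>k<n. (1 - x*p^k) * (1 - p^Suc k / x)) = (\<Prod>k<n. 1 - x*p^k) * (\<Prod>k<n. 1 - p^Suc k / x)"
    by (simp add: prod.distrib)
  also have "\<dots> = p^T / (-x)^n * (\<Prod>i<2*n. 1 + z*p^i)"
    unfolding sp h1 h2 prod.distrib h3 using p x by (simp add: field_simps)
  also have "\<dots> = (\<Sum>k\<le>2*n. qb p (2*n) k * (p^T / (-x)^n * p^(k*(k-1) div 2) * z^k))"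
    unfolding C sum_distrib_left by (simp add: algebra_simps)
  also have "\<dots> = (\<Sum>k\<le>2*n. qb p (2*n) k * cc x p (int k - int n))"
  proof (intro sum.cong refl arg_cong2[where f="(*)"])
    fix k
    have e1: "(-x) powi (int k - int n) = (-x)^k / (-x)^n"
      using x by (simp add: power_int_diff)
    have "p powi tri (int k - int n) = p powi (int T + int (k*(k-1) div 2) - int (n*k))"
      by (simp add: tri_shift T_def)
    also have "\<dots> = p^T * p^(k*(k-1) div 2) / p^(n*k)"
      using p by (simp add: power_int_diff power_int_add flip: of_nat_mult)
    finally have e2: "p powi tri (int k - int n) = p^T * p^(k*(k-1) div 2) / p^(n*k)" .
    have e3: "z^k = (-x)^k / p^(n*k)"
    proof -
      have "z^k = ((-x) / p^n)^k" by (simp only: z_def)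
      also have "\<dots> = (-x)^k/(p^n)^k" by (rule power_divide)
      also have "\<dots> = (-x)^k/p^(n*k)" by (simp only: power_mult)
      finally show ?thesis .
    qed
    show "p^T / (-x)^n * p^(k*(k-1) div 2) * z^k = cc x p (int k - int n)"
      unfolding cc_def e1 e2 e3 by (simp add: field_simps)
  qed
  finally show ?thesis .
qed

lemma tri_Suc_int: "tri (m + 1) = tri m + m"
proof -
  have "2 * tri (m+1) = 2 * (tri m + m)" unfolding ring_distribs tri2 by (simp add: algebra_simps)
  thus ?thesis by simp
qed

lemma tri_neg: "tri (-m) = tri m + m"
proof -
  have "2 * tri (-m) = 2 * (tri m + m)" unfolding ring_distribs tri2 by (simp add: algebra_simps)
  thus ?thesis by simp
qed

lemma norm_cc: "norm (cc x p m) = norm x powi m * norm p powi tri m"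
  by (simp add: cc_def norm_mult norm_power_int)

lemma cc_Suc:
  assumes "p \<noteq> 0"
  shows "cc x p (int k + 1) = cc x p (int k) * (-x) * p^k"
proof -
  have "(-x) powi (int k + 1) = (-x) powi (int k) * (-x)"
    by (rule power_int_add_1) auto
  moreover have "p powi tri (int k + 1) = p powi tri (int k) * p^k"
    using assms by (simp add: tri_Suc_int power_int_add)
  ultimately show ?thesis by (simp add: cc_def algebra_simps)
qed

lemma cc_neg:
  assumes "p \<noteq> 0" "x \<noteq> 0"
  shows "cc x p (-m) = cc (p/x) p m"
proof -
  have "(-(p/x)) powi m = p powi m * (-x) powi (-m)"
    using assms by (simp add: power_int_minus power_int_divide_distrib field_simps power_int_mult_distrib[symmetric])
  thus ?thesis using assms by (simp add: cc_def tri_neg power_int_add algebra_simps)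
qed

lemma summable_cc_pos:
  fixes x p :: complex
  assumes p: "p \<noteq> 0" "norm p < 1"
  shows "summable (\<lambda>k. norm (cc x p (int k)))"
proof -
  have "(\<lambda>n. norm p ^ n) \<longlonglongrightarrow> 0" using p by (intro LIMSEQ_power_zero) auto
  hence "(\<lambda>n. norm x * norm p ^ n) \<longlonglongrightarrow> 0" by (intro tendsto_mult_right_zero)
  hence "eventually (\<lambda>n. norm x * norm p ^ n < 1/2) sequentially"
    by (rule order_tendstoD) simp
  then obtain N where N: "\<And>n. n \<ge> N \<Longrightarrow> norm x * norm p ^ n < 1/2"
    by (auto simp: eventually_sequentially)
  show ?thesis
  proof (rule summable_ratio_test[of "1/2" N])
    fix n assume "n \<ge> N"
    have eq: "int (Suc n) = int n + 1" by simp
    have "cc x p (int (Suc n)) = cc x p (int n) * (-x) * p^n"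
      by (simp only: eq cc_Suc[OF p(1)])
    hence "norm (norm (cc x p (int (Suc n)))) = norm (cc x p (int n)) * (norm x * norm p ^ n)"
      by (simp add: norm_mult norm_power)
    also have "\<dots> \<le> norm (cc x p (int n)) * (1/2)"
      using N[OF \<open>n \<ge> N\<close>] by (intro mult_left_mono) auto
    finally show "norm (norm (cc x p (int (Suc n)))) \<le> 1/2 * norm (norm (cc x p (int n)))"
      by simp
  qed simp
qed

lemma summable_cc_neg:
  fixes x p :: complex
  assumes p: "p \<noteq> 0" "norm p < 1" and x: "x \<noteq> 0"
  shows "summable (\<lambda>k. norm (cc x p (-int k - 1)))"
proof -
  have "summable (\<lambda>k. norm (cc (p/x) p (int (Suc k))))"
    using summable_cc_pos[OF p, of "p/x"] by (subst summable_Suc_iff)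
  moreover have "cc x p (-int k - 1) = cc (p/x) p (int (Suc k))" for k
  proof -
    have "-int k - 1 = -(int (Suc k))" by simp
    thus ?thesis by (simp only: cc_neg[OF p(1) x])
  qed
  ultimately show ?thesis by simp
qed

lemma int_has_sum:
  fixes c :: "int \<Rightarrow> 'a::banach"
  assumes s1: "summable (\<lambda>k. norm (c (int k)))" and s2: "summable (\<lambda>k. norm (c (-int k - 1)))"
  shows "(c has_sum (suminf (\<lambda>k. c (int k)) + suminf (\<lambda>k. c (-int k - 1)))) UNIV"
proof -
  have h1: "((\<lambda>k. c (int k)) has_sum suminf (\<lambda>k. c (int k))) UNIV"
    by (rule norm_summable_imp_has_sum[OF s1 summable_sums[OF summable_norm_cancel[OF s1]]])
  have h2: "((\<lambda>k. c (-int k - 1)) has_sum suminf (\<lambda>k. c (-int k - 1))) UNIV"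
    by (rule norm_summable_imp_has_sum[OF s2 summable_sums[OF summable_norm_cancel[OF s2]]])
  have g1: "(c has_sum suminf (\<lambda>k. c (int k))) (range int)"
    using h1 by (subst has_sum_reindex) (auto simp: o_def)
  have g2: "(c has_sum suminf (\<lambda>k. c (-int k - 1))) (range (\<lambda>k. -int k - 1))"
    using h2 by (subst has_sum_reindex) (auto simp: o_def inj_on_def)
  have U: "range int \<union> range (\<lambda>k. -int k - 1) = UNIV"
  proof (intro set_eqI iffI)
    fix m :: int
    show "m \<in> range int \<union> range (\<lambda>k. -int k - 1)"
    proof (cases "m \<ge> 0")
      case True thus ?thesis by (auto intro!: image_eqI[of _ _ "nat m"])
    next
      case False thus ?thesis by (auto intro!: image_eqI[of _ _ "nat (-m-1)"])
    qed
  qed auto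
  have "(c has_sum (suminf (\<lambda>k. c (int k)) + suminf (\<lambda>k. c (-int k - 1))))
           (range int \<union> range (\<lambda>k. -int k - 1))"
    by (rule has_sum_Un_disjoint[OF g1 g2]) auto
  thus ?thesis unfolding U .
qed

lemma int_abs_summable:
  fixes c :: "int \<Rightarrow> 'a::banach"
  assumes s1: "summable (\<lambda>k. norm (c (int k)))" and s2: "summable (\<lambda>k. norm (c (-int k - 1)))"
  shows "(\<lambda>m. norm (c m)) summable_on UNIV"
  using int_has_sum[of "\<lambda>m. norm (c m)"] s1 s2 by (auto simp: summable_on_def)

lemma cc_has_sum:
  fixes x p :: complex
  assumes p: "p \<noteq> 0" "norm p < 1" and x: "x \<noteq> 0"
  shows "(cc x p has_sum (\<Sum>k. cc x p (int k) + cc x p (-int k - 1))) UNIV"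
    and "(\<lambda>m. norm (cc x p m)) summable_on UNIV"
proof -
  note s = summable_cc_pos[OF p, of x] summable_cc_neg[OF p x]
  show "(cc x p has_sum (\<Sum>k. cc x p (int k) + cc x p (-int k - 1))) UNIV"
    using int_has_sum[OF s] suminf_add[OF summable_norm_cancel[OF s(1)] summable_norm_cancel[OF s(2)]]
    by simp
  show "(\<lambda>m. norm (cc x p m)) summable_on UNIV" by (rule int_abs_summable[OF s])
qed

lemma conv_prod_geom_real:
  fixes r c :: real
  assumes "0 \<le> r" "r < 1"
  shows "convergent_prod (\<lambda>n. 1 + c * r^n)"
proof -
  have "summable (\<lambda>n. \<bar>c\<bar> * r ^ n)"
    using assms by (intro summable_mult summable_geometric) auto
  hence "summable (\<lambda>n. norm ((1 + c * r^n) - 1))" using assms by (simp add: abs_mult)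
  hence "abs_convergent_prod (\<lambda>n. 1 + c * r^n)" by (rule summable_imp_abs_convergent_prod)
  thus ?thesis by (rule abs_convergent_prod_imp_convergent_prod)
qed

lemma pp_nonzero:
  assumes "norm (p::complex) < 1" shows "pp p n \<noteq> 0"
proof -
  have "1 - p^Suc i \<noteq> 0" for i
  proof
    assume "1 - p^Suc i = 0"
    hence "p^Suc i = 1" by (metis right_minus_eq)
    hence "norm (p^Suc i) = 1" by (simp only: norm_one)
    moreover have "norm (p^Suc i) < 1" using assms by (intro norm_pow_lt1) auto
    ultimately show False by simp
  qed
  thus ?thesis unfolding pp_def by simp
qed

lemma qb_formula:
  assumes "norm p < 1" "k \<le> N"
  shows "qb p N k = pp p N / (pp p k * pp p (N-k))"
  using qb_closed[OF assms(2), of p] pp_nonzero[OF assms(1)] by (simp add: field_simps)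

lemma qb_sym:
  assumes "norm p < 1" "k \<le> N"
  shows "qb p N k = qb p N (N - k)"
proof -
  have "N - (N - k) = k" using assms by simp
  thus ?thesis using qb_formula[OF assms] qb_formula[OF assms(1), of "N-k" N] by (simp add: mult.commute)
qed

definition Pinf :: "complex \<Rightarrow> complex" where "Pinf p = (\<Prod>i. 1 - p^Suc i)"

lemma conv_Pinf: "norm (p::complex) < 1 \<Longrightarrow> convergent_prod (\<lambda>i. 1 - p^Suc i)"
  using conv_prod_geom[of p "-p"] by simp

lemma pp_lim: "norm p < 1 \<Longrightarrow> pp p \<longlonglongrightarrow> Pinf p"
  unfolding pp_def[abs_def] Pinf_def
  by (rule has_prod_imp_tendsto'[OF convergent_prod_has_prod[OF conv_Pinf]])

lemma Pinf_nonzero: "norm p < 1 \<Longrightarrow> Pinf p \<noteq> 0"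
proof -
  assume a: "norm p < 1"
  have "pp p \<longlonglongrightarrow> Pinf p" by (rule pp_lim[OF a])
  have "1 - p^Suc i \<noteq> 0" for i using pp_nonzero[OF a, of "Suc i"] by (simp add: ppS)
  thus ?thesis unfolding Pinf_def by (intro prodinf_nonzero conv_Pinf a)
qed

lemma qb_lim:
  assumes p: "norm p < 1"
  shows "(\<lambda>n. qb p (2*n) (n + j)) \<longlonglongrightarrow> 1 / Pinf p"
proof -
  have l: "pp p \<longlonglongrightarrow> Pinf p" by (rule pp_lim[OF p])
  have l1: "(\<lambda>n. pp p (2*n)) \<longlonglongrightarrow> Pinf p"
    using LIMSEQ_subseq_LIMSEQ[OF l, of "\<lambda>n. 2*n"] by (auto simp: strict_mono_def o_def)
  have l2: "(\<lambda>n. pp p (n + j)) \<longlonglongrightarrow> Pinf p" by (rule LIMSEQ_ignore_initial_segment[OF l])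
  have l3: "(\<lambda>n. pp p (n - j)) \<longlonglongrightarrow> Pinf p"
    by (rule filterlim_compose[OF l filterlim_minus_const_nat_at_top])
  have L0: "(\<lambda>n. pp p (2*n) / (pp p (n + j) * pp p (n - j))) \<longlonglongrightarrow> Pinf p / (Pinf p * Pinf p)"
    using Pinf_nonzero[OF p] by (intro tendsto_divide[OF l1 tendsto_mult[OF l2 l3]]) simp
  have e: "Pinf p / (Pinf p * Pinf p) = 1 / Pinf p" using Pinf_nonzero[OF p] by simp
  have L: "(\<lambda>n. pp p (2*n) / (pp p (n + j) * pp p (n - j))) \<longlonglongrightarrow> 1 / Pinf p"
    using L0 unfolding e .
  have ev: "eventually (\<lambda>n. pp p (2*n) / (pp p (n + j) * pp p (n - j)) = qb p (2*n) (n + j)) sequentially"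
    using eventually_ge_at_top[of j]
  proof eventually_elim
    case (elim n)
    hence eq: "2*n - (n+j) = n - j" by simp
    have "qb p (2*n) (n+j) = pp p (2*n) / (pp p (n+j) * pp p (2*n - (n+j)))"
      by (rule qb_formula[OF p]) (use elim in simp)
    thus ?case by (simp only: eq)
  qed
  show ?thesis by (rule Lim_transform_eventually[OF L ev])
qed

lemma pp_bounds:
  assumes p: "norm p < 1"
  shows "\<exists>L U. L > 0 \<and> (\<forall>n. L \<le> norm (pp p n) \<and> norm (pp p n) \<le> U)"
proof -
  define r where "r = norm p"
  have r: "0 \<le> r" "r < 1" using p by (auto simp: r_def)
  have rs1: "r^Suc i < 1" for i
  proof (cases "r = 0")
    case False thus ?thesis using r by (intro power_Suc_less_one) auto
  qed simp
  have rs: "0 \<le> r^Suc i" "r^Suc i < 1" for i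
    using r rs1 by auto
  define lo where "lo n = (\<Prod>i<n. 1 - r^Suc i)" for n
  define hi where "hi n = (\<Prod>i<n. 1 + r^Suc i)" for n
  have cl: "convergent_prod (\<lambda>i. 1 - r^Suc i)" using conv_prod_geom_real[OF r, of "-r"] by simp
  have ch: "convergent_prod (\<lambda>i. 1 + r^Suc i)" using conv_prod_geom_real[OF r, of "r"] by simp
  define Lr where "Lr = (\<Prod>i. 1 - r^Suc i)"
  define Ur where "Ur = (\<Prod>i. 1 + r^Suc i)"
  have llim: "lo \<longlonglongrightarrow> Lr" unfolding lo_def[abs_def] Lr_def
    by (rule has_prod_imp_tendsto'[OF convergent_prod_has_prod[OF cl]])
  have hlim: "hi \<longlonglongrightarrow> Ur" unfolding hi_def[abs_def] Ur_def
    by (rule has_prod_imp_tendsto'[OF convergent_prod_has_prod[OF ch]])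
  have lo_nn: "lo n \<ge> 0" for n unfolding lo_def using rs by (intro prod_nonneg) (auto simp: less_imp_le)
  have "decseq lo"
  proof (rule decseq_SucI)
    fix n
    have "lo (Suc n) = lo n * (1 - r^Suc n)" by (simp add: lo_def)
    also have "\<dots> \<le> lo n * 1" using lo_nn[of n] rs[of n] by (intro mult_left_mono) auto
    finally show "lo (Suc n) \<le> lo n" by simp
  qed
  hence Llo: "Lr \<le> lo n" for n using decseq_ge llim by blast
  have "incseq hi"
  proof (rule incseq_SucI)
    fix n
    have hnn: "hi n \<ge> 0" unfolding hi_def using rs by (intro prod_nonneg) (auto simp: add_nonneg_nonneg)
    have "hi n * 1 \<le> hi n * (1 + r^Suc n)" using hnn rs[of n] by (intro mult_left_mono) auto
    also have "\<dots> = hi (Suc n)" by (simp add: hi_def)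
    finally show "hi n \<le> hi (Suc n)" by simp
  qed
  hence Uhi: "hi n \<le> Ur" for n using incseq_le hlim by blast
  have nz: "1 - r^Suc i \<noteq> 0" for i using rs1[of i] by auto
  have "Lr \<noteq> 0" unfolding Lr_def by (intro prodinf_nonzero cl nz)
  moreover have "Lr \<ge> 0" using llim lo_nn by (intro LIMSEQ_le_const) auto
  ultimately have Lpos: "Lr > 0" by simp
  have "Lr \<le> norm (pp p n) \<and> norm (pp p n) \<le> Ur" for n
  proof
    have "lo n \<le> norm (pp p n)" unfolding lo_def pp_def prod_norm[symmetric]
    proof (rule prod_mono)
      fix i assume "i \<in> {..<n}"
      have "norm (1::complex) - norm (p^Suc i) \<le> norm (1 - p^Suc i)" by (rule norm_triangle_ineq2)
      thus "0 \<le> 1 - r^Suc i \<and> 1 - r^Suc i \<le> norm (1 - p^Suc i)"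
        using rs[of i] by (simp add: r_def norm_power norm_mult)
    qed
    thus "Lr \<le> norm (pp p n)" using Llo[of n] by simp
    have "norm (pp p n) \<le> hi n" unfolding hi_def pp_def prod_norm[symmetric]
    proof (rule prod_mono)
      fix i assume "i \<in> {..<n}"
      have "norm (1 - p^Suc i) \<le> norm (1::complex) + norm (p^Suc i)" by (rule norm_triangle_ineq4)
      thus "0 \<le> norm (1 - p^Suc i) \<and> norm (1 - p^Suc i) \<le> 1 + r^Suc i"
        by (simp add: r_def norm_power norm_mult)
    qed
    thus "norm (pp p n) \<le> Ur" using Uhi[of n] by simp
  qed
  with Lpos show ?thesis by blast
qed

lemma qb_bound:
  assumes p: "norm p < 1"
  shows "\<exists>B. \<forall>N k. norm (qb p N k) \<le> B"
proof -
  obtain L U where LU: "L > 0" "\<And>n. L \<le> norm (pp p n)" "\<And>n. norm (pp p n) \<le> U"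
    using pp_bounds[OF p] by blast
  have "norm (qb p N k) \<le> U / (L * L)" for N k
  proof (cases "k \<le> N")
    case True
    have "norm (qb p N k) = norm (pp p N) / (norm (pp p k) * norm (pp p (N-k)))"
      using qb_formula[OF p True] by (simp add: norm_divide norm_mult)
    also have "\<dots> \<le> U / (L * L)"
    proof (rule frac_le)
      show "0 \<le> U" using LU(3)[of 0] norm_ge_zero[of "pp p 0"] by linarith
      show "norm (pp p N) \<le> U" by (rule LU(3))
      show "0 < L * L" using LU(1) by simp
      show "L * L \<le> norm (pp p k) * norm (pp p (N-k))"
        using LU(1) by (intro mult_mono LU(2)) auto
    qed
    finally show ?thesis .
  next
    case False
    hence "qb p N k = 0" by (intro qb_gt) simp
    moreover have "U \<ge> 0" using LU(3)[of 0] by (simp add: pp_def)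
    ultimately show ?thesis using LU by simp
  qed
  thus ?thesis by blast
qed

definition jt :: "complex \<Rightarrow> complex \<Rightarrow> complex" where
  "jt x p = (\<Prod>n. (1 - x*p^n) * (1 - p^Suc n / x) * (1 - p^Suc n))"
definition ser :: "complex \<Rightarrow> complex \<Rightarrow> complex" where
  "ser x p = infsum (cc x p) UNIV"

lemma ser_eq:
  assumes "p \<noteq> 0" "norm p < 1" "x \<noteq> 0"
  shows "ser x p = (\<Sum>k. cc x p (int k) + cc x p (-int k - 1))"
  unfolding ser_def by (rule infsumI[OF cc_has_sum(1)[OF assms]])

lemma finite_to_suminf:
  assumes p: "norm p < 1"
  shows "(\<Sum>k\<le>2*n. qb p (2*n) k * cc x p (int k - int n))
       = (\<Sum>j. qb p (2*n) (n+j) * cc x p (int j) + qb p (2*n) (n+j+1) * cc x p (-int j - 1))"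
proof -
  define F where "F k = qb p (2*n) k * cc x p (int k - int n)" for k
  define a where "a j = qb p (2*n) (n+j) * cc x p (int j)" for j
  define b where "b j = qb p (2*n) (n+j+1) * cc x p (-int j - 1)" for j
  have s1: "(\<Sum>k\<le>2*n. F k) = (\<Sum>k<n. F k) + (\<Sum>k\<in>{n..2*n}. F k)"
  proof -
    have "{..2*n} = {..<n} \<union> {n..2*n}" by auto
    thus ?thesis by (simp add: sum.union_disjoint ivl_disj_int)
  qed
  have s2: "(\<Sum>k<n. F k) = (\<Sum>j<n. b j)"
  proof -
    have "(\<Sum>k<n. F k) = (\<Sum>j<n. F (n - Suc j))" by (rule sum.nat_diff_reindex[symmetric])
    also have "\<dots> = (\<Sum>j<n. b j)"
    proof (rule sum.cong[OF refl])
      fix j assume "j \<in> {..<n}"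
      hence j: "j < n" by simp
      have "qb p (2*n) (n - Suc j) = qb p (2*n) (2*n - (n - Suc j))"
        by (rule qb_sym[OF p]) (use j in simp)
      also have "2*n - (n - Suc j) = n + j + 1" using j by simp
      finally have q: "qb p (2*n) (n - Suc j) = qb p (2*n) (n + j + 1)" .
      have ie: "int (n - Suc j) - int n = -int j - 1" using j by simp
      show "F (n - Suc j) = b j" unfolding F_def b_def q ie by (rule refl)
    qed
    finally show ?thesis .
  qed
  have s3: "(\<Sum>k\<in>{n..2*n}. F k) = (\<Sum>j\<le>n. a j)"
  proof -
    have "(\<Sum>k\<in>{0+n..n+n}. F k) = (\<Sum>j\<in>{0..n}. F (j + n))" by (rule sum.shift_bounds_cl_nat_ivl)
    moreover have "{0+n..n+n} = {n..2*n}" by auto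
    moreover have "F (j + n) = a j" for j unfolding F_def a_def by (simp add: add.commute)
    ultimately show ?thesis by (simp add: atLeast0AtMost mult_2)
  qed
  have z: "a j + b j = 0" if "j \<notin> {..n}" for j
    using that unfolding a_def b_def by (simp add: qb_gt)
  have "(\<Sum>j. a j + b j) = (\<Sum>j\<le>n. a j + b j)" by (rule suminf_finite) (use z in auto)
  also have "\<dots> = (\<Sum>j\<le>n. a j) + (\<Sum>j<n. b j) + b n" by (simp add: sum.distrib lessThan_Suc_atMost[symmetric])
  also have "b n = 0" unfolding b_def by (simp add: qb_gt)
  finally have "(\<Sum>j. a j + b j) = (\<Sum>j\<le>n. a j) + (\<Sum>j<n. b j)" by simp
  thus ?thesis using s1 s2 s3 unfolding F_def a_def b_def by simp
qed

theorem jtp: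
  assumes p: "p \<noteq> 0" "norm p < 1" and x: "x \<noteq> 0"
  shows "jt x p = ser x p"
proof -
  define g where "g k = (1 - x*p^k) * (1 - p^Suc k / x)" for k
  have c1: "convergent_prod (\<lambda>k. 1 - x*p^k)" using conv_prod_geom[OF p(2), of "-x"] by simp
  have c2: "convergent_prod (\<lambda>k. 1 - p^Suc k / x)"
  proof -
    have "convergent_prod (\<lambda>k. 1 + (-(p/x)) * p^k)" by (rule conv_prod_geom[OF p(2)])
    moreover have "1 + (-(p/x)) * p^k = 1 - p^Suc k / x" for k by (simp add: field_simps)
    ultimately show ?thesis by simp
  qed
  have cg: "convergent_prod g" unfolding g_def by (rule convergent_prod_mult[OF c1 c2])
  have jt_eq: "jt x p = prodinf g * Pinf p"
    unfolding jt_def Pinf_def g_def using prodinf_mult[OF cg[unfolded g_def] conv_Pinf[OF p(2)]] by simp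
  have Lg: "(\<lambda>n. \<Prod>k<n. g k) \<longlonglongrightarrow> prodinf g"
    by (rule has_prod_imp_tendsto'[OF convergent_prod_has_prod[OF cg]])
  obtain B where B: "\<And>N k. norm (qb p N k) \<le> B" using qb_bound[OF p(2)] by blast
  define A where "A j n = qb p (2*n) (n+j) * cc x p (int j) + qb p (2*n) (n+j+1) * cc x p (-int j - 1)" for j n
  define b where "b j = (cc x p (int j) + cc x p (-int j - 1)) / Pinf p" for j
  define M where "M j = B * (norm (cc x p (int j)) + norm (cc x p (-int j - 1)))" for j
  have lim: "(\<lambda>n. A j n) \<longlonglongrightarrow> b j" for j
  proof -
    have l1: "(\<lambda>n. qb p (2*n) (n+j)) \<longlonglongrightarrow> 1 / Pinf p" by (rule qb_lim[OF p(2)])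
    have l2: "(\<lambda>n. qb p (2*n) (n+(j+1))) \<longlonglongrightarrow> 1 / Pinf p" by (rule qb_lim[OF p(2)])
    have "(\<lambda>n. qb p (2*n) (n+j) * cc x p (int j) + qb p (2*n) (n+(j+1)) * cc x p (-int j - 1))
          \<longlonglongrightarrow> 1 / Pinf p * cc x p (int j) + 1 / Pinf p * cc x p (-int j - 1)"
      by (intro tendsto_add tendsto_mult l1 l2 tendsto_const)
    moreover have "1 / Pinf p * cc x p (int j) + 1 / Pinf p * cc x p (-int j - 1) = b j"
      unfolding b_def by (simp add: add_divide_distrib)
    ultimately show ?thesis unfolding A_def by (simp add: add.assoc)
  qed
  have bound: "norm (A j n) \<le> M j" for j n
  proof -
    have "norm (A j n) \<le> norm (qb p (2*n) (n+j)) * norm (cc x p (int j))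
                       + norm (qb p (2*n) (n+j+1)) * norm (cc x p (-int j - 1))"
      unfolding A_def by (rule order.trans[OF norm_triangle_ineq]) (simp add: norm_mult)
    also have "\<dots> \<le> B * norm (cc x p (int j)) + B * norm (cc x p (-int j - 1))"
      by (intro add_mono mult_right_mono B) auto
    finally show ?thesis unfolding M_def by (simp add: algebra_simps)
  qed
  have s1: "summable (\<lambda>k. norm (cc x p (int k)))" by (rule summable_cc_pos[OF p])
  have s2: "summable (\<lambda>k. norm (cc x p (-int k - 1)))" by (rule summable_cc_neg[OF p x])
  have sM: "summable M" unfolding M_def by (intro summable_mult summable_add s1 s2)
  have T: "(\<lambda>n. suminf (\<lambda>j. A j n)) \<longlonglongrightarrow> suminf b"
    using tannerys_theorem[of A b sequentially M] lim bound sM by (auto intro: always_eventually)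
  have eqn: "(\<Prod>k<n. g k) = suminf (\<lambda>j. A j n)" for n
    unfolding g_def A_def using finite_jtp[OF p(1) x, of n] finite_to_suminf[OF p(2), of n x] by simp
  have "prodinf g = suminf b"
    using LIMSEQ_unique[OF Lg] T unfolding eqn by blast
  also have "suminf b = (\<Sum>k. cc x p (int k) + cc x p (-int k - 1)) / Pinf p"
    unfolding b_def by (rule suminf_divide[OF summable_add[OF summable_norm_cancel[OF s1] summable_norm_cancel[OF s2]]])
  also have "\<dots> = ser x p / Pinf p" using ser_eq[OF p x] by simp
  finally show ?thesis using jt_eq Pinf_nonzero[OF p(2)] by simp
qed

lemma product_has_sum:
  fixes a b :: "int \<Rightarrow> complex"
  assumes ha: "(a has_sum A) UNIV" and na: "(\<lambda>m. norm (a m)) summable_on UNIV"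
      and hb: "(b has_sum B) UNIV" and nb: "(\<lambda>m. norm (b m)) summable_on UNIV"
  shows "((\<lambda>(m,n). a m * b n) has_sum (A*B)) UNIV"
proof -
  obtain NB where hnb: "((\<lambda>n. norm (b n)) has_sum NB) UNIV" using nb by (auto simp: summable_on_def)
  define F where "F z = norm (a (fst z)) * norm (b (snd z))" for z :: "int \<times> int"
  define H where "H z = a (fst z) * b (snd z)" for z :: "int \<times> int"
  have "F summable_on Sigma UNIV (\<lambda>_. UNIV)"
  proof (rule summable_on_SigmaI[where g="\<lambda>m. norm (a m) * NB"])
    fix m :: int
    assume "m \<in> UNIV"
    have "((\<lambda>n. norm (a m) * norm (b n)) has_sum norm (a m) * NB) UNIV"
      by (rule has_sum_cmult_right[OF hnb])
    thus "((\<lambda>n. F (m, n)) has_sum norm (a m) * NB) UNIV" unfolding F_def fst_conv snd_conv .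
  next
    show "(\<lambda>m. norm (a m) * NB) summable_on UNIV" using na by (rule summable_on_cmult_left)
  next
    fix m n :: int
    show "0 \<le> F (m, n)" unfolding F_def by simp
  qed
  hence "(\<lambda>z. norm (H z)) summable_on UNIV"
    unfolding F_def H_def norm_mult UNIV_Times_UNIV[symmetric] .
  hence sab: "H summable_on UNIV"
    by (rule abs_summable_summable)
  have "(H has_sum (A*B)) (Sigma UNIV (\<lambda>_. UNIV))"
  proof (rule has_sum_SigmaI[where g="\<lambda>m. a m * B"])
    fix m :: int
    assume "m \<in> UNIV"
    have "((\<lambda>n. a m * b n) has_sum a m * B) UNIV" by (rule has_sum_cmult_right[OF hb])
    thus "((\<lambda>n. H (m, n)) has_sum a m * B) UNIV" unfolding H_def fst_conv snd_conv .
  next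
    show "((\<lambda>m. a m * B) has_sum A * B) UNIV" by (rule has_sum_cmult_left[OF ha])
  next
    show "H summable_on Sigma UNIV (\<lambda>_. UNIV)" using sab unfolding UNIV_Times_UNIV .
  qed
  hence "(H has_sum (A*B)) UNIV" unfolding UNIV_Times_UNIV .
  moreover have "H = (\<lambda>(m,n). a m * b n)" unfolding H_def by (auto simp: fun_eq_iff)
  ultimately show ?thesis by simp
qed

lemma cc_has_ser:
  assumes "p \<noteq> 0" "norm p < 1" "x \<noteq> 0"
  shows "(cc x p has_sum ser x p) UNIV"
  using cc_has_sum(1)[OF assms] ser_eq[OF assms] by simp

lemma minus_one_powi: "(-1::complex) powi k = (if even k then 1 else -1)"
  by (cases "k \<ge> 0") (auto simp: power_int_def even_nat_iff)

lemma cc_uminus: "cc (-x) p m = (-1) powi m * cc x p m"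
proof -
  have "(-(-x)) powi m = ((-1) * (-x)) powi m" by simp
  also have "\<dots> = (-1) powi m * (-x) powi m" by (rule power_int_mult_distrib)
  finally show ?thesis unfolding cc_def by simp
qed

lemma tri_add_diff: "tri (k+l) + tri (k-l) = 2 * tri k + 2 * tri l + l"
proof -
  have "2 * (tri (k+l) + tri (k-l)) = 2 * (2 * tri k + 2 * tri l + l)"
    unfolding ring_distribs tri2 by (simp add: algebra_simps)
  thus ?thesis by simp
qed

lemma cc_key:
  fixes x y p :: complex
  assumes p: "p \<noteq> 0" and x: "x \<noteq> 0" and y: "y \<noteq> 0"
  shows "cc x p (k+l) * cc y p (k-l) = cc (-(x*y)) (p^2) k * cc (-(p*x/y)) (p^2) l"
proof -
  have A: "(-x) powi (k+l) * (-y) powi (k-l) = (x*y) powi k * (x/y) powi l"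
  proof -
    have "(-x) powi (k+l) * (-y) powi (k-l) = ((-x) powi k * (-y) powi k) * ((-x) powi l / (-y) powi l)"
      using x y by (simp add: power_int_add power_int_diff)
    also have "(-x) powi k * (-y) powi k = ((-x)*(-y)) powi k" by (rule power_int_mult_distrib[symmetric])
    also have "(-x) powi l / (-y) powi l = ((-x)/(-y)) powi l" by (rule power_int_divide_distrib[symmetric])
    finally show ?thesis by simp
  qed
  have B: "p powi tri (k+l) * p powi tri (k-l) = (p^2) powi tri k * (p^2) powi tri l * p powi l"
  proof -
    have "p powi tri (k+l) * p powi tri (k-l) = p powi (tri (k+l) + tri (k-l))"
      using p by (simp add: power_int_add)
    also have "\<dots> = p powi (2 * tri k) * p powi (2 * tri l) * p powi l"
      unfolding tri_add_diff using p by (simp add: power_int_add)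
    also have "\<dots> = (p^2) powi tri k * (p^2) powi tri l * p powi l"
      by (simp add: power_int_power)
    finally show ?thesis .
  qed
  have C: "(p*x/y) powi l = p powi l * (x/y) powi l"
    by (simp add: power_int_mult_distrib power_int_divide_distrib)
  have "cc x p (k+l) * cc y p (k-l) = ((-x) powi (k+l) * (-y) powi (k-l)) * (p powi tri (k+l) * p powi tri (k-l))"
    unfolding cc_def by (simp add: algebra_simps)
  also have "\<dots> = (x*y) powi k * (x/y) powi l * ((p^2) powi tri k * (p^2) powi tri l * p powi l)"
    unfolding A B ..
  also have "\<dots> = cc (-(x*y)) (p^2) k * cc (-(p*x/y)) (p^2) l"
    unfolding cc_def minus_minus C by (simp add: algebra_simps)
  finally show ?thesis .
qed

theorem entry29:
  fixes x y p :: complex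
  assumes p: "p \<noteq> 0" "norm p < 1" and x: "x \<noteq> 0" and y: "y \<noteq> 0"
  shows "ser x p * ser y p + ser (-x) p * ser (-y) p = 2 * ser (-(x*y)) (p^2) * ser (-(p*x/y)) (p^2)"
proof -
  have p2: "p^2 \<noteq> 0" "norm (p^2) < 1" using p by (auto simp: norm_power power_less_one_iff)
  have xy: "-(x*y) \<noteq> 0" "-(p*x/y) \<noteq> 0" using p x y by auto
  note hs = cc_has_ser cc_has_sum(2)
  have H1: "((\<lambda>(m,n). cc x p m * cc y p n) has_sum (ser x p * ser y p)) UNIV"
    by (rule product_has_sum) (use p x y in \<open>auto intro: hs\<close>)
  have H2: "((\<lambda>(m,n). cc (-x) p m * cc (-y) p n) has_sum (ser (-x) p * ser (-y) p)) UNIV"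
    by (rule product_has_sum) (use p x y in \<open>auto intro: hs\<close>)
  define G where "G = (\<lambda>(m,n). cc x p m * cc y p n + cc (-x) p m * cc (-y) p n)"
  have HG: "(G has_sum (ser x p * ser y p + ser (-x) p * ser (-y) p)) UNIV"
    unfolding G_def using has_sum_add[OF H1 H2] by (simp add: case_prod_unfold)
  have Geq: "G (m,n) = (if even (m+n) then 2 * (cc x p m * cc y p n) else 0)" for m n
  proof -
    have "(-1::complex) powi m * (-1) powi n = (-1) powi (m+n)" by (simp add: power_int_add)
    hence "G (m,n) = cc x p m * cc y p n * (1 + (-1) powi (m+n))"
      unfolding G_def cc_uminus by (simp add: algebra_simps)
    thus ?thesis by (simp add: minus_one_powi)
  qed
  define \<phi> where "\<phi> = (\<lambda>(k,l). (k+l, k-l::int))"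
  have inj: "inj \<phi>" unfolding \<phi>_def inj_def by auto
  have rng: "range \<phi> = {(m,n). even (m+n)}"
  proof (intro set_eqI iffI)
    fix mn :: "int \<times> int" assume "mn \<in> {(m,n). even (m+n)}"
    then obtain m n where mn: "mn = (m,n)" "even (m+n)" by auto
    obtain t where t: "m + n = 2*t" using mn(2) by (rule evenE)
    have "\<phi> (t, m - t) = (m, n)" unfolding \<phi>_def using t by simp
    thus "mn \<in> range \<phi>" using mn by (metis rangeI)
  qed (auto simp: \<phi>_def)
  have "(G has_sum (ser x p * ser y p + ser (-x) p * ser (-y) p)) (range \<phi>)"
    using HG by (subst has_sum_cong_neutral[where T=UNIV and g=G]) (auto simp: rng Geq split: if_splits)
  hence H3: "((G \<circ> \<phi>) has_sum (ser x p * ser y p + ser (-x) p * ser (-y) p)) UNIV"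
    by (subst (asm) has_sum_reindex[OF inj]) 
  have H4: "((\<lambda>(k,l). cc (-(x*y)) (p^2) k * cc (-(p*x/y)) (p^2) l) has_sum
              (ser (-(x*y)) (p^2) * ser (-(p*x/y)) (p^2))) UNIV"
    by (rule product_has_sum) (use p2 xy in \<open>auto intro: hs\<close>)
  have "G \<circ> \<phi> = (\<lambda>kl. 2 * (case kl of (k,l) \<Rightarrow> cc (-(x*y)) (p^2) k * cc (-(p*x/y)) (p^2) l))"
  proof
    fix kl :: "int \<times> int"
    obtain k l where kl: "kl = (k,l)" by (cases kl)
    have "even ((k+l) + (k-l))" by simp
    thus "(G \<circ> \<phi>) kl = 2 * (case kl of (k,l) \<Rightarrow> cc (-(x*y)) (p^2) k * cc (-(p*x/y)) (p^2) l)"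
      unfolding kl \<phi>_def using cc_key[OF p(1) x y, of k l] by (simp add: Geq del: even_add)
  qed
  with H4 have H5: "((G \<circ> \<phi>) has_sum 2 * (ser (-(x*y)) (p^2) * ser (-(p*x/y)) (p^2))) UNIV"
    using has_sum_cmult_right by simp
  from has_sum_unique[OF H3 H5] show ?thesis by simp
qed

lemma jt_split:
  fixes q s :: complex
  assumes q: "norm q < 1" "q \<noteq> 0" and a: "0 < a" "a < d" and s: "s * s = 1"
  shows "jt (s * q^a) (q^d) = (\<Prod>n. 1 - s * q^(a+d*n)) * (\<Prod>n. 1 - s * q^((d-a)+d*n)) * pinf q d d"
proof -
  have d: "d > 0" using a by simp
  have s0: "s \<noteq> 0" using s by auto
  have c1: "convergent_prod (\<lambda>n. 1 - s * q^(a+d*n))" using conv_prod_lin[OF q(1) d, of "-s" a] by simp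
  have c2: "convergent_prod (\<lambda>n. 1 - s * q^((d-a)+d*n))" using conv_prod_lin[OF q(1) d, of "-s" "d-a"] by simp
  have c3: "convergent_prod (\<lambda>n. 1 - q^(d+d*n))" using conv_pinf[OF q(1) d] .
  have fac: "(1 - (s * q^a)*(q^d)^n) * (1 - (q^d)^Suc n / (s * q^a)) * (1 - (q^d)^Suc n)
           = (1 - s * q^(a+d*n)) * (1 - s * q^((d-a)+d*n)) * (1 - q^(d+d*n))" for n
  proof -
    have e1: "(s * q^a)*(q^d)^n = s * q^(a+d*n)" by (simp add: power_add power_mult mult.assoc)
    have hh: "q^(d*Suc n) = q^((d-a)+d*n) * q^a" using a by (simp add: power_add[symmetric] algebra_simps)
    have h0: "(q^d)^Suc n = q^(d*Suc n)" by (simp only: power_mult)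
    have h: "(q^d)^Suc n = q^((d-a)+d*n) * q^a" by (simp only: h0 hh)
    have sinv: "inverse s = s" using s by (rule inverse_unique)
    have "(q^d)^Suc n / (s * q^a) = q^((d-a)+d*n) / s" unfolding h using q(2) by simp
    also have "\<dots> = s * q^((d-a)+d*n)" by (simp add: divide_inverse sinv mult.commute)
    finally have e2: "(q^d)^Suc n / (s * q^a) = s * q^((d-a)+d*n)" .
    have dd: "d * Suc n = d + d*n" by simp
    have e3: "(q^d)^Suc n = q^(d+d*n)" by (simp only: h0 dd)
    show ?thesis unfolding e1 e2 unfolding e3 ..
  qed
  have "jt (s * q^a) (q^d) = (\<Prod>n. (1 - s * q^(a+d*n)) * (1 - s * q^((d-a)+d*n)) * (1 - q^(d+d*n)))"
    unfolding jt_def fac ..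
  also have "\<dots> = (\<Prod>n. (1 - s * q^(a+d*n)) * (1 - s * q^((d-a)+d*n))) * (\<Prod>n. 1 - q^(d+d*n))"
    by (rule prodinf_mult[OF convergent_prod_mult[OF c1 c2] c3, symmetric])
  also have "(\<Prod>n. (1 - s * q^(a+d*n)) * (1 - s * q^((d-a)+d*n))) = (\<Prod>n. 1 - s * q^(a+d*n)) * (\<Prod>n. 1 - s * q^((d-a)+d*n))"
    by (rule prodinf_mult[OF c1 c2, symmetric])
  finally show ?thesis unfolding pinf_def .
qed

lemma jt_P:
  assumes "norm q < 1" "q \<noteq> 0" "0 < a" "a < d"
  shows "jt (q^a) (q^d) = pinf q a d * pinf q (d-a) d * pinf q d d"
  using jt_split[OF assms, of 1] unfolding pinf_def by simp

lemma jt_N: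
  assumes "norm q < 1" "q \<noteq> 0" "0 < a" "a < d"
  shows "jt (-(q^a)) (q^d) = ninf q a d * ninf q (d-a) d * pinf q d d"
  using jt_split[OF assms, of "-1"] unfolding ninf_def by simp

theorem main_identity:
  fixes q :: complex
  assumes q: "norm q < 1" "q \<noteq> 0"
  shows "(f 6 q)^8 * f 1 q / ((f 3 q)^4 * (f 2 q)^2)
           + f 2 q * (f 3 q)^2 * (f 12 q)^3 / (f 1 q * f 4 q * f 6 q)
         = 2 * (f 4 q)^2 * (f 12 q)^2 * f 6 q / (f 2 q * f 3 q)"
proof -
  define p where "p = q^6"
  have p: "p \<noteq> 0" "norm p < 1" using q by (auto simp: p_def norm_power power_less_one_iff)
  have E: "ser q p * ser (-(q^3)) p + ser (-q) p * ser (-(-(q^3))) p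
         = 2 * ser (-(q * -(q^3))) (p^2) * ser (-(p*q/(-(q^3)))) (p^2)"
    by (rule entry29) (use p q in auto)
  have p2: "p^2 = q^12" unfolding p_def by (simp flip: power_mult)
  have a1: "-(q * -(q^3)) = q^4" by (simp add: power_Suc[symmetric] power_add[symmetric] algebra_simps eval_nat_numeral)
  have a2: "-(p*q/(-(q^3))) = q^4" using q(2) unfolding p_def by (simp add: field_simps eval_nat_numeral)
  have pn: "p^2 \<noteq> 0" "norm (p^2) < 1" using p by (auto simp: norm_power power_less_one_iff)
  have E2: "jt q p * jt (-(q^3)) p + jt (-q) p * jt (q^3) p = 2 * jt (q^4) (q^12) * jt (q^4) (q^12)"
  proof -
    have "jt q p = ser q p" by (rule jtp) (use p q in auto)
    moreover have "jt (-(q^3)) p = ser (-(q^3)) p" by (rule jtp) (use p q in auto)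
    moreover have "jt (-q) p = ser (-q) p" by (rule jtp) (use p q in auto)
    moreover have "jt (q^3) p = ser (-(-(q^3))) p" by (simp, rule jtp) (use p q in auto)
    moreover have "jt (q^4) (q^12) = ser (-(q * -(q^3))) (p^2)"
      unfolding a1 p2[symmetric] by (rule jtp) (use pn q in auto)
    moreover have "jt (q^4) (q^12) = ser (-(p*q/(-(q^3)))) (p^2)"
      unfolding a2 p2[symmetric] by (rule jtp) (use pn q in auto)
    ultimately show ?thesis using E by simp
  qed
  define P where "P a d = pinf q a d" for a d
  have Pnz: "P a d \<noteq> 0" if "a > 0" "d > 0" for a d unfolding P_def by (rule pinf_nonzero[OF q(1) that(2) that(1)])
  have j1: "jt q p = P 1 6 * P 5 6 * P 6 6" using jt_P[OF q, of 1 6] unfolding P_def p_def by simp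
  have j2: "jt (-q) p = ninf q 1 6 * ninf q 5 6 * P 6 6" using jt_N[OF q, of 1 6] unfolding P_def p_def by simp
  have j3: "jt (q^3) p = P 3 6 * P 3 6 * P 6 6" using jt_P[OF q, of 3 6] unfolding P_def p_def by simp
  have j4: "jt (-(q^3)) p = ninf q 3 6 * ninf q 3 6 * P 6 6" using jt_N[OF q, of 3 6] unfolding P_def p_def by simp
  have jr: "jt (q^4) (q^12) = P 4 12 * P 8 12 * P 12 12" using jt_P[OF q, of 4 12] unfolding P_def by simp
  have n1: "ninf q 1 6 = P 2 12 / P 1 6" using ninf_pinf[OF q(1), of 6 1] Pnz[of 1 6] unfolding P_def by (simp add: field_simps numeral_2_eq_2)
  have n5: "ninf q 5 6 = P 10 12 / P 5 6" using ninf_pinf[OF q(1), of 6 5] Pnz[of 5 6] unfolding P_def by (simp add: field_simps)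
  have n3: "ninf q 3 6 = P 6 12 / P 3 6" using ninf_pinf[OF q(1), of 6 3] Pnz[of 3 6] unfolding P_def by (simp add: field_simps)
  have f1: "f 1 q = P 1 6 * P 2 6 * P 3 6 * P 4 6 * P 5 6 * P 6 6"
    using pinf_split[OF q(1), of 1 6 1] unfolding f_pinf P_def by (simp add: numeral_eq_Suc)
  have f2: "f 2 q = P 2 6 * P 4 6 * P 6 6"
    using pinf_split[OF q(1), of 2 3 2] unfolding f_pinf P_def by (simp add: numeral_eq_Suc)
  have f3: "f 3 q = P 3 6 * P 6 6"
    using pinf_split[OF q(1), of 3 2 3] unfolding f_pinf P_def by (simp add: numeral_eq_Suc)
  have f4: "f 4 q = P 4 12 * P 8 12 * P 12 12"
    using pinf_split[OF q(1), of 4 3 4] unfolding f_pinf P_def by (simp add: numeral_eq_Suc)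
  have f6: "f 6 q = P 6 6" unfolding f_pinf P_def ..
  have f12: "f 12 q = P 12 12" unfolding f_pinf P_def ..
  have s6: "P 6 6 = P 6 12 * P 12 12"
    using pinf_split[OF q(1), of 6 2 6] unfolding P_def by (simp add: numeral_eq_Suc)
  have s2: "P 2 6 = P 2 12 * P 8 12"
    using pinf_split[OF q(1), of 6 2 2] unfolding P_def by (simp add: numeral_eq_Suc)
  have s4: "P 4 6 = P 4 12 * P 10 12"
    using pinf_split[OF q(1), of 6 2 4] unfolding P_def by (simp add: numeral_eq_Suc)
  have nz: "P 1 6 \<noteq> 0" "P 3 6 \<noteq> 0" "P 5 6 \<noteq> 0" "P 2 12 \<noteq> 0" "P 4 12 \<noteq> 0" "P 6 12 \<noteq> 0"
           "P 8 12 \<noteq> 0" "P 10 12 \<noteq> 0" "P 12 12 \<noteq> 0" by (simp_all add: Pnz)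
  define K where "K = f 6 q * (f 12 q)^2 / (f 2 q * f 3 q)"
  have T1: "(f 6 q)^8 * f 1 q / ((f 3 q)^4 * (f 2 q)^2) = K * (jt q p * jt (-(q^3)) p)"
    unfolding K_def j1 j4 n3 f1 f2 f3 f6 f12 s6 s2 s4 using nz by (simp add: field_simps, (simp add: eval_nat_numeral)?)
  have T2: "f 2 q * (f 3 q)^2 * (f 12 q)^3 / (f 1 q * f 4 q * f 6 q) = K * (jt (-q) p * jt (q^3) p)"
    unfolding K_def j2 j3 n1 n5 f1 f2 f3 f4 f6 f12 s6 s2 s4 using nz by (simp add: field_simps, (simp add: eval_nat_numeral)?)
  have T3: "2 * (f 4 q)^2 * (f 12 q)^2 * f 6 q / (f 2 q * f 3 q) = K * (2 * jt (q^4) (q^12) * jt (q^4) (q^12))"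
    unfolding K_def jr f2 f3 f4 f6 f12 s6 s2 s4 using nz by (simp add: field_simps, (simp add: eval_nat_numeral)?)
  show ?thesis unfolding T1 T2 T3 using E2 by (simp add: ring_distribs[symmetric])
qed

theorem lemma2p1:
  fixes q :: complex
  assumes "norm q < 1"
  shows "(f 6 q)^8 * f 1 q / ((f 3 q)^4 * (f 2 q)^2)
           + f 2 q * (f 3 q)^2 * (f 12 q)^3 / (f 1 q * f 4 q * f 6 q)
         = 2 * (f 4 q)^2 * (f 12 q)^2 * f 6 q / (f 2 q * f 3 q)"
proof (cases "q = 0")
  case True
  have f0: "f m 0 = 1" if "m > 0" for m
  proof -
    have "(\<lambda>n. 1 - (0::complex)^(m * Suc n)) = (\<lambda>n. 1)"
      using that by (auto simp: fun_eq_iff power_0_left)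
    thus ?thesis unfolding f_def by simp
  qed
  show ?thesis using True by (simp add: f0)
next
  case False
  show ?thesis by (rule main_identity[OF assms False])
qed

end
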